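(* In the following setting: $\mathcal{W}$ is the weight space of an MLP, $G$ its neuron-permutation group acting orthonormally on $\mathcal{W}$ (see context), $p(\boldsymbol{\omega})$ a $G$-invariant prior density, $p(\mathbf{Y}\mid\mathbf{X},\boldsymbol{\omega})$ a likelihood that is $G$-invariant in $\boldsymbol{\omega}$, $q_\theta$ a variational density on $\mathcal{W}$ with symmetrization $q_\theta^G(\boldsymbol{\omega})=\frac{1}{|G|}\sum_{g\in G}q_\theta(g^{-1}\cdot\boldsymbol{\omega})$, and $$\mathcal{L}_{\mathrm{VI}}(\theta)=\mathbb{E}_{q_\theta}\log p(\mathbf{Y}\mid\mathbf{X},\boldsymbol{\omega})-\mathrm{KL}(q_\theta\|p),\quad \mathcal{L}^G_{\mathrm{VI}}(\theta)=\mathbb{E}_{q^G_\theta}\log p(\mathbf{Y}\mid\mathbf{X},\boldsymbol{\omega})-\mathrm{KL}(q^G_\theta\|p)$$ (all assumed finite). Then for every variational parameter $\theta$, $\mathcal{L}^G_{\mathrm{VI}}(\theta)\ge\mathcal{L}_{\mathrm{VI}}(\theta)$, with equality if and only if $q_\theta$ is $G$-invariant.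
   Context: The MLP weight space is $\mathcal{W}=\bigoplus_{l=1}^L(\mathbb{R}^{d_l\times d_{l-1}}\oplus\mathbb{R}^{d_l})$ with $\boldsymbol{\omega}=(\mathbf{W}_1,\dots,\mathbf{W}_L,\mathbf{b}_1,\dots,\mathbf{b}_L)$ and Euclidean norm, and $G=S_{d_1}\times\dots\times S_{d_{L-1}}$. For $g=(\tau_1,\dots,\tau_{L-1})$ with permutation matrices $\mathbf{P}_{\tau_l}$, $g\cdot\boldsymbol{\omega}$ has $\mathbf{W}_1'=\mathbf{P}_{\tau_1}^\top\mathbf{W}_1$, $\mathbf{b}_1'=\mathbf{P}_{\tau_1}^\top\mathbf{b}_1$; $\mathbf{W}_l'=\mathbf{P}_{\tau_l}^\top\mathbf{W}_l\mathbf{P}_{\tau_{l-1}}$, $\mathbf{b}_l'=\mathbf{P}_{\tau_l}^\top\mathbf{b}_l$ for $2\le l\le L-1$; $\mathbf{W}_L'=\mathbf{W}_L\mathbf{P}_{\tau_{L-1}}$, $\mathbf{b}_L'=\mathbf{b}_L$. A density $h$ is $G$-invariant if $h(g\cdot\boldsymbol{\omega})=h(\boldsymbol{\omega})$ for all $g,\boldsymbol{\omega}$ (densities identified up to null sets). *)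

theory Defs
  imports "HOL-Probability.Probability" "HOL-Combinatorics.Permutations"
begin

text \<open>Layers are numbered 1..L;
  d l is the width of layer l (d 0 = input dimension).
  Wc l i j is entry (i,j) of W_l (i < d l, j < d (l-1));  Bc l i is entry i of b_l.\<close>
datatype coord = Wc nat nat nat | Bc nat nat

definition mlp_coords :: "(nat \<Rightarrow> nat) \<Rightarrow> nat \<Rightarrow> coord set" where
  "mlp_coords d L =
     {Wc l i j | l i j. 1 \<le> l \<and> l \<le> L \<and> i < d l \<and> j < d (l - 1)}
   \<union> {Bc l i | l i. 1 \<le> l \<and> l \<le> L \<and> i < d l}"

definition weight_space :: "(nat \<Rightarrow> nat) \<Rightarrow> nat \<Rightarrow> (coord \<Rightarrow> real) measure" where
  "weight_space d L = PiM (mlp_coords d L) (\<lambda>_. lborel)"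

text \<open>The group G = S_{d_1} x ... x S_{d_{L-1}}: g l is a permutation of {..<d l} for
  1 \<le> l \<le> L-1, and the identity for all other l (in particular tau_0 = tau_L = id).\<close>
definition perm_group :: "(nat \<Rightarrow> nat) \<Rightarrow> nat \<Rightarrow> (nat \<Rightarrow> nat \<Rightarrow> nat) set" where
  "perm_group d L = {g. \<forall>l. g l permutes (if 1 \<le> l \<and> l < L then {..<d l} else {})}"

definition grp_inv :: "(nat \<Rightarrow> nat \<Rightarrow> nat) \<Rightarrow> (nat \<Rightarrow> nat \<Rightarrow> nat)" where
  "grp_inv g = (\<lambda>l. inv (g l))"

text \<open>Action: W_l' = P_{tau_l}^T W_l P_{tau_{l-1}}, b_l' = P_{tau_l}^T b_l, with
  P_tau e_j = e_{tau j}, i.e. (W_l')_{ij} = (W_l)_{tau_l i, tau_{l-1} j}, (b_l')_i = (b_l)_{tau_l i}.\<close>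
definition act :: "(nat \<Rightarrow> nat) \<Rightarrow> nat \<Rightarrow> (nat \<Rightarrow> nat \<Rightarrow> nat) \<Rightarrow> (coord \<Rightarrow> real) \<Rightarrow> (coord \<Rightarrow> real)" where
  "act d L g \<omega> = restrict (\<lambda>c. case c of
       Wc l i j \<Rightarrow> \<omega> (Wc l (g l i) (g (l - 1) j))
     | Bc l i \<Rightarrow> \<omega> (Bc l (g l i))) (mlp_coords d L)"

definition is_density :: "(coord \<Rightarrow> real) measure \<Rightarrow> ((coord \<Rightarrow> real) \<Rightarrow> real) \<Rightarrow> bool" where
  "is_density M h \<longleftrightarrow> h \<in> borel_measurable M \<and> (\<forall>\<omega>\<in>space M. 0 \<le> h \<omega>)
      \<and> (\<integral>\<^sup>+ \<omega>. ennreal (h \<omega>) \<partial>M) = 1"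

definition G_invariant :: "(nat \<Rightarrow> nat) \<Rightarrow> nat \<Rightarrow> ((coord \<Rightarrow> real) \<Rightarrow> real) \<Rightarrow> bool" where
  "G_invariant d L h \<longleftrightarrow>
     (\<forall>g\<in>perm_group d L. AE \<omega> in weight_space d L. h (act d L g \<omega>) = h \<omega>)"

definition symmetrize :: "(nat \<Rightarrow> nat) \<Rightarrow> nat \<Rightarrow> ((coord \<Rightarrow> real) \<Rightarrow> real) \<Rightarrow> ((coord \<Rightarrow> real) \<Rightarrow> real)" where
  "symmetrize d L q = (\<lambda>\<omega>. (1 / real (card (perm_group d L))) *
       (\<Sum>g\<in>perm_group d L. q (act d L (grp_inv g) \<omega>)))"

text \<open>KL(q || p) = \<integral> q log (q/p)  (with 0 log 0 = 0).\<close>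
definition KL :: "(coord \<Rightarrow> real) measure \<Rightarrow> ((coord \<Rightarrow> real) \<Rightarrow> real) \<Rightarrow> ((coord \<Rightarrow> real) \<Rightarrow> real) \<Rightarrow> real" where
  "KL M q p = (\<integral>\<omega>. q \<omega> * ln (q \<omega> / p \<omega>) \<partial>M)"

definition ELBO :: "(coord \<Rightarrow> real) measure \<Rightarrow> ((coord \<Rightarrow> real) \<Rightarrow> real) \<Rightarrow> ((coord \<Rightarrow> real) \<Rightarrow> real)
     \<Rightarrow> ((coord \<Rightarrow> real) \<Rightarrow> real) \<Rightarrow> real" where
  "ELBO M lik p q = (\<integral>\<omega>. q \<omega> * ln (lik \<omega>) \<partial>M) - KL M q p"

definition finite_terms :: "(coord \<Rightarrow> real) measure \<Rightarrow> ((coord \<Rightarrow> real) \<Rightarrow> real) \<Rightarrow> ((coord \<Rightarrow> real) \<Rightarrow> real)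
     \<Rightarrow> ((coord \<Rightarrow> real) \<Rightarrow> real) \<Rightarrow> bool" where
  "finite_terms M lik p q \<longleftrightarrow>
     integrable M (\<lambda>\<omega>. q \<omega> * ln (lik \<omega>)) \<and>
     (AE \<omega> in M. p \<omega> = 0 \<longrightarrow> q \<omega> = 0) \<and>
     integrable M (\<lambda>\<omega>. q \<omega> * ln (q \<omega> / p \<omega>))"

end

theory Submission
  imports Defs
begin


lemma tangent_ineq:
  fixes x m :: real
  assumes "0 \<le> x" "0 < m"
  shows "x - m \<le> x * ln (x / m)"
proof (cases "x = 0")
  case True then show ?thesis using assms by simp
next
  case False
  then have x: "0 < x" using assms by simp
  have "ln (m / x) \<le> m / x - 1" using ln_le_minus_one[of "m/x"] x assms by simp
  then have "x * ln (m / x) \<le> x * (m / x - 1)" using x by (simp add: mult_left_mono)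
  also have "\<dots> = m - x" using x by (simp add: field_simps)
  finally have "x * ln (m / x) \<le> m - x" .
  moreover have "ln (m / x) = - ln (x / m)" using x assms by (simp add: ln_div)
  ultimately show ?thesis by simp
qed

lemma tangent_eq:
  fixes x m :: real
  assumes "0 \<le> x" "0 < m" "x * ln (x / m) = x - m"
  shows "x = m"
proof (cases "x = 0")
  case True then show ?thesis using assms by simp
next
  case False
  then have x: "0 < x" using assms by simp
  have "ln (m / x) = - ln (x / m)" using x assms by (simp add: ln_div)
  then have "x * ln (m / x) = m - x" using assms(3) by simp
  then have "ln (m / x) = m / x - 1" using x by (simp add: field_simps)
  then have "m / x = 1" using ln_eq_minus_one[of "m/x"] x assms by simp
  then show ?thesis using x by simp
qed

lemma split_term:
  fixes x m c :: real
  assumes "0 \<le> x" "0 < m" "0 < c"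
  shows "x * ln (x / c) = x * ln (x / m) + x * ln (m / c)"
proof (cases "x = 0")
  case True then show ?thesis by simp
next
  case False
  then have x: "0 < x" using assms by simp
  have "ln (x / c) = ln (x / m) + ln (m / c)"
    using x assms by (simp add: ln_div)
  then show ?thesis by (simp add: algebra_simps)
qed

lemma jensen_pt:
  fixes x :: "'g \<Rightarrow> real" and c :: real
  assumes G: "finite G" "G \<noteq> {}" and x: "\<And>g. g \<in> G \<Longrightarrow> 0 \<le> x g" and c: "0 \<le> c"
  defines "m \<equiv> (1 / real (card G)) * (\<Sum>g\<in>G. x g)"
  shows "m * ln (m / c) \<le> (1 / real (card G)) * (\<Sum>g\<in>G. x g * ln (x g / c))"
    and "m * ln (m / c) = (1 / real (card G)) * (\<Sum>g\<in>G. x g * ln (x g / c)) \<Longrightarrow> 0 < c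
          \<Longrightarrow> \<forall>g\<in>G. x g = m"
proof -
  have N: "0 < real (card G)" using G by (simp add: card_gt_0_iff)
  have m0: "0 \<le> m" unfolding m_def using x N by (simp add: sum_nonneg)
  define e where "e g = x g * ln (x g / m) - (x g - m)" for g
  have e0: "\<And>g. g \<in> G \<Longrightarrow> 0 < m \<Longrightarrow> 0 \<le> e g" unfolding e_def using tangent_ineq x by fastforce
  have sumx: "(\<Sum>g\<in>G. x g) = real (card G) * m" unfolding m_def using N by simp
  have key: "(\<Sum>g\<in>G. x g * ln (x g / c)) = real (card G) * (m * ln (m / c)) + (\<Sum>g\<in>G. e g)"
    if "0 < m" "0 < c"
  proof -
    have "(\<Sum>g\<in>G. x g * ln (x g / c)) = (\<Sum>g\<in>G. e g + (x g - m) + x g * ln (m / c))"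
      by (intro sum.cong refl) (simp add: e_def split_term[OF x that(1) that(2)])
    also have "\<dots> = (\<Sum>g\<in>G. e g) + ((\<Sum>g\<in>G. x g) - real (card G) * m) + (\<Sum>g\<in>G. x g) * ln (m / c)"
      by (simp add: sum.distrib sum_subtractf sum_distrib_right)
    also have "\<dots> = real (card G) * (m * ln (m / c)) + (\<Sum>g\<in>G. e g)"
      by (simp add: sumx)
    finally show ?thesis .
  qed
  have allz: "\<forall>g\<in>G. x g = 0" if "m = 0"
  proof -
    have "(\<Sum>g\<in>G. x g) = 0" using sumx that by simp
    then show ?thesis using sum_nonneg_eq_0_iff[OF G(1)] x by blast
  qed
  show "m * ln (m / c) \<le> (1 / real (card G)) * (\<Sum>g\<in>G. x g * ln (x g / c))"
  proof (cases "m = 0 \<or> c = 0")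
    case True
    then show ?thesis using allz by auto
  next
    case False
    then have mp: "0 < m" and cp: "0 < c" using m0 c by auto
    have "0 \<le> (\<Sum>g\<in>G. e g)" using e0 mp by (simp add: sum_nonneg)
    then show ?thesis using key[OF mp cp] N by (simp add: field_simps)
  qed
  assume eq: "m * ln (m / c) = (1 / real (card G)) * (\<Sum>g\<in>G. x g * ln (x g / c))" and cp: "0 < c"
  show "\<forall>g\<in>G. x g = m"
  proof (cases "m = 0")
    case True then show ?thesis using allz by auto
  next
    case False
    then have mp: "0 < m" using m0 by auto
    have "(\<Sum>g\<in>G. e g) = 0" using key[OF mp cp] eq N by (simp add: field_simps)
    then have "\<forall>g\<in>G. e g = 0" using sum_nonneg_eq_0_iff[OF G(1)] e0 mp by blast
    show ?thesis
    proof
      fix g assume g: "g \<in> G"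
      then have "x g * ln (x g / m) = x g - m" using \<open>\<forall>g\<in>G. e g = 0\<close> unfolding e_def by simp
      then show "x g = m" using tangent_eq[OF x[OF g] mp] by simp
    qed
  qed
qed



lemma perm_groupD:
  assumes "g \<in> perm_group d L"
  shows "g l permutes (if 1 \<le> l \<and> l < L then {..<d l} else {})"
  using assms unfolding perm_group_def by auto

lemma perm_group_bij: "g \<in> perm_group d L \<Longrightarrow> bij (g l)"
  using perm_groupD permutes_bij by blast

lemma perm_group_lt: "g \<in> perm_group d L \<Longrightarrow> i < d l \<Longrightarrow> g l i < d l"
  using perm_groupD[of g d L l] permutes_in_image[of "g l"]
  by (cases "1 \<le> l \<and> l < L") auto

lemma perm_group_inv: "g \<in> perm_group d L \<Longrightarrow> grp_inv g \<in> perm_group d L"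
proof -
  assume g: "g \<in> perm_group d L"
  show ?thesis unfolding perm_group_def grp_inv_def
    using permutes_inv[OF perm_groupD[OF g]] by blast
qed

lemma grp_inv_inv: "g \<in> perm_group d L \<Longrightarrow> grp_inv (grp_inv g) = g"
  unfolding grp_inv_def using perm_group_bij by (auto simp: inv_inv_eq)

lemma perm_group_id: "(\<lambda>l. id) \<in> perm_group d L"
  unfolding perm_group_def by (auto intro: permutes_id)

lemma grp_inv_id: "grp_inv (\<lambda>l. id) = (\<lambda>l. id)"
  unfolding grp_inv_def by auto

lemma finite_perm_group: "finite (perm_group d L)"
proof -
  let ?r = "\<lambda>g. restrict g {1..<L}"
  have inj: "inj_on ?r (perm_group d L)"
  proof (rule inj_onI)
    fix g h assume g: "g \<in> perm_group d L" and h: "h \<in> perm_group d L" and e: "?r g = ?r h"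
    show "g = h"
    proof
      fix l show "g l = h l"
      proof (cases "1 \<le> l \<and> l < L")
        case True then show ?thesis using fun_cong[OF e, of l] by auto
      next
        case False
        then have "(if 1 \<le> l \<and> l < L then {..<d l} else {}) = {}" by (simp only: if_False)
        then show ?thesis using perm_groupD[OF g, of l] perm_groupD[OF h, of l] by simp
      qed
    qed
  qed
  have "?r ` perm_group d L \<subseteq> PiE {1..<L} (\<lambda>l. {p. p permutes {..<d l}})"
  proof (rule image_subsetI)
    fix g assume g: "g \<in> perm_group d L"
    show "?r g \<in> PiE {1..<L} (\<lambda>l. {p. p permutes {..<d l}})"
    proof (unfold PiE_iff, intro conjI ballI)
      fix l assume l: "l \<in> {1..<L}"
      then have "(if 1 \<le> l \<and> l < L then {..<d l} else {}) = {..<d l}" by simp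
      then show "?r g l \<in> {p. p permutes {..<d l}}" using perm_groupD[OF g, of l] l by simp
    qed simp
  qed
  moreover have "finite (PiE {1..<L} (\<lambda>l. {p. p permutes {..<d l}}))"
    by (intro finite_PiE finite_permutations) auto
  ultimately have "finite (?r ` perm_group d L)" by (rule finite_subset)
  then show ?thesis using inj finite_imageD by blast
qed

lemma card_perm_group_pos: "0 < card (perm_group d L)"
  by (metis card_gt_0_iff empty_iff finite_perm_group perm_group_id)

lemma finite_mlp_coords: "finite (mlp_coords d L)"
proof -
  have "mlp_coords d L \<subseteq> (\<lambda>(l,i,j). Wc l i j) ` ({..L} \<times> {..<Max (d ` {..L})} \<times> {..<Max (d ` {..L})})
     \<union> (\<lambda>(l,i). Bc l i) ` ({..L} \<times> {..<Max (d ` {..L})})"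
  proof
    fix c assume "c \<in> mlp_coords d L"
    then show "c \<in> (\<lambda>(l,i,j). Wc l i j) ` ({..L} \<times> {..<Max (d ` {..L})} \<times> {..<Max (d ` {..L})})
     \<union> (\<lambda>(l,i). Bc l i) ` ({..L} \<times> {..<Max (d ` {..L})})"
      unfolding mlp_coords_def
    proof (elim UnE CollectE exE conjE)
      fix l i j assume c: "c = Wc l i j" "1 \<le> l" "l \<le> L" "i < d l" "j < d (l - 1)"
      have "d l \<le> Max (d ` {..L})" "d (l - 1) \<le> Max (d ` {..L})" using c by auto
      then show ?thesis using c by (auto simp: image_iff)
    next
      fix l i assume c: "c = Bc l i" "1 \<le> l" "l \<le> L" "i < d l"
      have "d l \<le> Max (d ` {..L})" using c by auto
      then show ?thesis using c by (auto simp: image_iff)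
    qed
  qed
  then show ?thesis by (rule finite_subset) auto
qed

definition cperm :: "(nat \<Rightarrow> nat \<Rightarrow> nat) \<Rightarrow> coord \<Rightarrow> coord" where
  "cperm g c = (case c of Wc l i j \<Rightarrow> Wc l (g l i) (g (l - 1) j) | Bc l i \<Rightarrow> Bc l (g l i))"

lemma act_eq: "act d L g = (\<lambda>\<omega>. \<lambda>c\<in>mlp_coords d L. \<omega> (cperm g c))"
  unfolding act_def cperm_def
  by (intro ext restrict_ext) (auto split: coord.split)

lemma cperm_bij:
  assumes g: "g \<in> perm_group d L"
  shows "bij_betw (cperm g) (mlp_coords d L) (mlp_coords d L)"
proof -
  have sub: "cperm g ` mlp_coords d L \<subseteq> mlp_coords d L"
    unfolding mlp_coords_def cperm_def using perm_group_lt[OF g] by auto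
  have inj: "inj_on (cperm g) (mlp_coords d L)"
  proof (rule inj_onI)
    fix a b assume "a \<in> mlp_coords d L" "b \<in> mlp_coords d L" "cperm g a = cperm g b"
    moreover have "\<And>l x y. g l x = g l y \<Longrightarrow> x = y"
      using perm_group_bij[OF g] by (auto simp: bij_def inj_def)
    ultimately show "a = b" unfolding cperm_def by (auto split: coord.splits)
  qed
  show ?thesis unfolding bij_betw_def using endo_inj_surj[OF finite_mlp_coords sub inj] inj by simp
qed

lemma reindex_preserving:
  fixes I :: "'i set" and \<sigma> :: "'i \<Rightarrow> 'i"
  assumes I: "finite I" and \<sigma>: "bij_betw \<sigma> I I"
  shows "distr (PiM I (\<lambda>_. lborel :: real measure)) (PiM I (\<lambda>_. lborel)) (\<lambda>\<omega>. \<lambda>c\<in>I. \<omega> (\<sigma> c))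
          = PiM I (\<lambda>_. lborel)"
proof -
  interpret product_sigma_finite "\<lambda>_::'i. lborel :: real measure"
    by (unfold_locales)
  have meas: "(\<lambda>\<omega>. \<lambda>c\<in>I. \<omega> (\<sigma> c)) \<in> measurable (PiM I (\<lambda>_. lborel :: real measure)) (PiM I (\<lambda>_. lborel))"
    using \<sigma> by (intro measurable_restrict measurable_component_singleton) (auto simp: bij_betw_def)
  show ?thesis
  proof (rule PiM_eqI[OF I])
    fix A assume A: "\<And>i. i \<in> I \<Longrightarrow> A i \<in> sets (lborel :: real measure)"
    let ?T = "\<lambda>\<omega>. \<lambda>c\<in>I. \<omega> (\<sigma> c)"
    let ?s = "inv_into I \<sigma>"
    have pre: "?T -` Pi\<^sub>E I A \<inter> space (PiM I (\<lambda>_. lborel)) = Pi\<^sub>E I (\<lambda>j. A (?s j))"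
    proof (intro equalityI subsetI)
      fix \<omega> assume w: "\<omega> \<in> ?T -` Pi\<^sub>E I A \<inter> space (PiM I (\<lambda>_. lborel))"
      show "\<omega> \<in> Pi\<^sub>E I (\<lambda>j. A (?s j))"
      proof (unfold PiE_iff, intro conjI ballI)
        fix j assume j: "j \<in> I"
        have sj: "?s j \<in> I" "\<sigma> (?s j) = j" using \<sigma> j
          by (auto simp: bij_betw_def inv_into_into f_inv_into_f)
        have "?T \<omega> (?s j) \<in> A (?s j)" using w sj by (auto simp: PiE_iff)
        then show "\<omega> j \<in> A (?s j)" using sj by simp
      next
        show "\<omega> \<in> extensional I" using w by (auto simp: space_PiM PiE_iff)
      qed
    next
      fix \<omega> assume w: "\<omega> \<in> Pi\<^sub>E I (\<lambda>j. A (?s j))"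
      have "\<And>c. c \<in> I \<Longrightarrow> \<omega> (\<sigma> c) \<in> A c"
      proof -
        fix c assume c: "c \<in> I"
        have "\<sigma> c \<in> I" "?s (\<sigma> c) = c" using \<sigma> c by (auto simp: bij_betw_def inv_into_f_f)
        then show "\<omega> (\<sigma> c) \<in> A c" using w by (metis PiE_mem)
      qed
      then show "\<omega> \<in> ?T -` Pi\<^sub>E I A \<inter> space (PiM I (\<lambda>_. lborel))"
        using w by (auto simp: space_PiM PiE_iff)
    qed
    have "emeasure (distr (PiM I (\<lambda>_. lborel)) (PiM I (\<lambda>_. lborel)) ?T) (Pi\<^sub>E I A)
        = emeasure (PiM I (\<lambda>_. lborel)) (Pi\<^sub>E I (\<lambda>j. A (?s j)))"
      using A I by (subst emeasure_distr[OF meas]) (auto simp: pre intro!: sets_PiM_I_finite)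
    also have "\<dots> = (\<Prod>j\<in>I. emeasure lborel (A (?s j)))"
    proof (rule emeasure_PiM[OF I])
      fix j assume "j \<in> I"
      then have "?s j \<in> I" using \<sigma> by (auto simp: bij_betw_def inv_into_into)
      then show "A (?s j) \<in> sets lborel" using A by simp
    qed
    also have "\<dots> = (\<Prod>c\<in>I. emeasure lborel (A (?s (\<sigma> c))))"
      using prod.reindex_bij_betw[OF \<sigma>, of "\<lambda>j. emeasure lborel (A (?s j))"] by simp
    also have "\<dots> = (\<Prod>c\<in>I. emeasure lborel (A c))"
      using \<sigma> by (intro prod.cong refl) (auto simp: bij_betw_def inv_into_f_f)
    finally show "emeasure (distr (PiM I (\<lambda>_. lborel)) (PiM I (\<lambda>_. lborel)) ?T) (Pi\<^sub>E I A) = (\<Prod>c\<in>I. emeasure lborel (A c))" .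
  qed simp
qed

lemma act_meas:
  "act d L g \<in> measurable (weight_space d L) (weight_space d L)" if "g \<in> perm_group d L"
  using cperm_bij[OF that] unfolding act_eq weight_space_def
  by (intro measurable_restrict measurable_component_singleton) (auto simp: bij_betw_def)

lemma act_distr:
  "distr (weight_space d L) (weight_space d L) (act d L g) = weight_space d L" if "g \<in> perm_group d L"
  unfolding act_eq weight_space_def
  by (rule reindex_preserving[OF finite_mlp_coords cperm_bij[OF that]])

lemma act_id: "\<omega> \<in> space (weight_space d L) \<Longrightarrow> act d L (\<lambda>l. id) \<omega> = \<omega>"
  unfolding act_eq cperm_def weight_space_def
  by (auto simp: space_PiM PiE_iff extensional_def split: coord.split intro!: ext)



theorem corollary4p2:
  fixes d :: "nat \<Rightarrow> nat" and L :: nat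
    and p lik :: "(coord \<Rightarrow> real) \<Rightarrow> real"
    and q :: "'t \<Rightarrow> (coord \<Rightarrow> real) \<Rightarrow> real" and \<theta> :: 't
  assumes L: "1 \<le> L"
    and prior: "is_density (weight_space d L) p" "G_invariant d L p"
    and lik_pos: "\<forall>\<omega>\<in>space (weight_space d L). 0 < lik \<omega>"
    and lik_meas: "lik \<in> borel_measurable (weight_space d L)"
    and lik_inv: "G_invariant d L lik"
    and q_dens: "is_density (weight_space d L) (q \<theta>)"
    and fin: "finite_terms (weight_space d L) lik p (q \<theta>)"
    and finG: "finite_terms (weight_space d L) lik p (symmetrize d L (q \<theta>))"
  shows "ELBO (weight_space d L) lik p (symmetrize d L (q \<theta>))
           \<ge> ELBO (weight_space d L) lik p (q \<theta>)
    \<and> (ELBO (weight_space d L) lik p (symmetrize d L (q \<theta>))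
           = ELBO (weight_space d L) lik p (q \<theta>)
       \<longleftrightarrow> G_invariant d L (q \<theta>))"
proof -
  define M where "M = weight_space d L"
  define G where "G = perm_group d L"
  define N where "N = real (card G)"
  define qt where "qt = q \<theta>"
  define qG where "qG = symmetrize d L qt"
  define T where "T = act d L"
  define x where "x g \<omega> = qt (T (grp_inv g) \<omega>)" for g \<omega>
  have Gfin: "finite G" and Gne: "G \<noteq> {}" and Npos: "0 < N"
    unfolding G_def N_def using finite_perm_group perm_group_id[of d L] card_perm_group_pos by auto
  have Ginv: "grp_inv g \<in> G" if "g \<in> G" for g using that perm_group_inv unfolding G_def by blast
  have qG_eq: "qG \<omega> = (1 / N) * (\<Sum>g\<in>G. x g \<omega>)" for \<omega>
    unfolding qG_def symmetrize_def N_def G_def x_def T_def by simp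
  have qt_meas: "qt \<in> borel_measurable M" and qt_nn: "\<And>\<omega>. \<omega> \<in> space M \<Longrightarrow> 0 \<le> qt \<omega>"
    using q_dens unfolding is_density_def qt_def M_def by auto
  have p_nn: "\<And>\<omega>. \<omega> \<in> space M \<Longrightarrow> 0 \<le> p \<omega>"
    using prior unfolding is_density_def M_def by auto
  have Tmeas: "T h \<in> measurable M M" if "h \<in> G" for h
    using act_meas that unfolding T_def M_def G_def by blast
  have Tdistr: "distr M M (T h) = M" if "h \<in> G" for h
    using act_distr that unfolding T_def M_def G_def by blast
  have Tspace: "T h \<omega> \<in> space M" if "h \<in> G" "\<omega> \<in> space M" for h \<omega>
    using measurable_space[OF Tmeas[OF that(1)] that(2)] .
  have int_tr: "integrable M (\<lambda>\<omega>. f (T h \<omega>)) \<and> integral\<^sup>L M (\<lambda>\<omega>. f (T h \<omega>)) = integral\<^sup>L M f"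
    if "h \<in> G" "integrable M f" for h and f :: "(coord \<Rightarrow> real) \<Rightarrow> real"
  proof -
    have fm: "f \<in> borel_measurable M" using that(2) by simp
    have "integrable (distr M M (T h)) f" using that(2) Tdistr[OF that(1)] by simp
    then have "integrable M (\<lambda>\<omega>. f (T h \<omega>))"
      using integrable_distr_eq[OF Tmeas[OF that(1)] fm] by simp
    moreover have "integral\<^sup>L M (\<lambda>\<omega>. f (T h \<omega>)) = integral\<^sup>L (distr M M (T h)) f"
      using integral_distr[OF Tmeas[OF that(1)] fm] by simp
    ultimately show ?thesis using Tdistr[OF that(1)] by simp
  qed
  have AE_tr: "AE \<omega> in M. P (T h \<omega>)" if "h \<in> G" "AE \<omega> in M. P \<omega>" for h P
  proof -
    have "AE \<omega> in distr M M (T h). P \<omega>" unfolding Tdistr[OF that(1)] by (rule that(2))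
    then show ?thesis using AE_distrD[OF Tmeas[OF that(1)]] by blast
  qed
  have x_nn: "0 \<le> x g \<omega>" if "g \<in> G" "\<omega> \<in> space M" for g \<omega>
    unfolding x_def using qt_nn Tspace Ginv that by blast
  have x_id: "x (\<lambda>l. id) \<omega> = qt \<omega>" if "\<omega> \<in> space M" for \<omega>
    unfolding x_def T_def using that act_id grp_inv_id unfolding M_def by metis
  have x_inv: "x (grp_inv h) \<omega> = qt (T h \<omega>)" if "h \<in> G" for h \<omega>
    unfolding x_def using grp_inv_inv that unfolding G_def by metis
  have idG: "(\<lambda>l. id) \<in> G" unfolding G_def by (rule perm_group_id)

  define Ilik where "Ilik = integral\<^sup>L M (\<lambda>\<omega>. qt \<omega> * ln (lik \<omega>))"
  have f1: "integrable M (\<lambda>\<omega>. qt \<omega> * ln (lik \<omega>))"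
    using fin unfolding finite_terms_def M_def qt_def by simp
  have lik_x: "integrable M (\<lambda>\<omega>. x g \<omega> * ln (lik \<omega>)) \<and> integral\<^sup>L M (\<lambda>\<omega>. x g \<omega> * ln (lik \<omega>)) = Ilik"
    if g: "g \<in> G" for g
  proof -
    let ?h = "grp_inv g"
    have h: "?h \<in> G" using Ginv g .
    have ae: "AE \<omega> in M. lik (T ?h \<omega>) = lik \<omega>"
      using lik_inv h unfolding G_invariant_def M_def G_def T_def by blast
    have tr: "integrable M (\<lambda>\<omega>. qt (T ?h \<omega>) * ln (lik (T ?h \<omega>)))
          \<and> integral\<^sup>L M (\<lambda>\<omega>. qt (T ?h \<omega>) * ln (lik (T ?h \<omega>))) = Ilik"
      using int_tr[OF h f1] unfolding Ilik_def by simp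
    have ae2: "AE \<omega> in M. qt (T ?h \<omega>) * ln (lik (T ?h \<omega>)) = x g \<omega> * ln (lik \<omega>)"
      using ae by eventually_elim (simp add: x_def)
    have xm: "(\<lambda>\<omega>. x g \<omega> * ln (lik \<omega>)) \<in> borel_measurable M"
      unfolding x_def using measurable_compose[OF Tmeas[OF h] qt_meas] lik_meas
      unfolding M_def by measurable
    show ?thesis using tr ae2 integrable_cong_AE[OF _ xm ae2] integral_cong_AE[OF _ xm ae2] 
      by (metis borel_measurable_integrable)
  qed
  have lik_G: "integral\<^sup>L M (\<lambda>\<omega>. qG \<omega> * ln (lik \<omega>)) = Ilik"
  proof -
    have "integral\<^sup>L M (\<lambda>\<omega>. qG \<omega> * ln (lik \<omega>))
        = integral\<^sup>L M (\<lambda>\<omega>. (1 / N) * (\<Sum>g\<in>G. x g \<omega> * ln (lik \<omega>)))"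
      by (simp add: qG_eq sum_distrib_right)
    also have "\<dots> = (1 / N) * (\<Sum>g\<in>G. integral\<^sup>L M (\<lambda>\<omega>. x g \<omega> * ln (lik \<omega>)))"
      using lik_x by (simp add: integral_sum)
    also have "\<dots> = Ilik" using lik_x Npos unfolding N_def by simp
    finally show ?thesis .
  qed

  define F where "F \<omega> = (1 / N) * (\<Sum>g\<in>G. x g \<omega> * ln (x g \<omega> / p \<omega>))" for \<omega>
  define D where "D \<omega> = F \<omega> - qG \<omega> * ln (qG \<omega> / p \<omega>)" for \<omega>
  have f2: "integrable M (\<lambda>\<omega>. qt \<omega> * ln (qt \<omega> / p \<omega>))"
    using fin unfolding finite_terms_def M_def qt_def by simp
  have f2G: "integrable M (\<lambda>\<omega>. qG \<omega> * ln (qG \<omega> / p \<omega>))"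
    using finG unfolding finite_terms_def M_def qt_def qG_def by simp
  have kl_x: "integrable M (\<lambda>\<omega>. x g \<omega> * ln (x g \<omega> / p \<omega>))
      \<and> integral\<^sup>L M (\<lambda>\<omega>. x g \<omega> * ln (x g \<omega> / p \<omega>)) = KL M qt p"
    if g: "g \<in> G" for g
  proof -
    let ?h = "grp_inv g"
    have h: "?h \<in> G" using Ginv g .
    have ae: "AE \<omega> in M. p (T ?h \<omega>) = p \<omega>"
      using prior(2) h unfolding G_invariant_def M_def G_def T_def by blast
    have tr: "integrable M (\<lambda>\<omega>. qt (T ?h \<omega>) * ln (qt (T ?h \<omega>) / p (T ?h \<omega>)))
          \<and> integral\<^sup>L M (\<lambda>\<omega>. qt (T ?h \<omega>) * ln (qt (T ?h \<omega>) / p (T ?h \<omega>))) = KL M qt p"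
      using int_tr[OF h f2] unfolding KL_def by simp
    have ae2: "AE \<omega> in M. qt (T ?h \<omega>) * ln (qt (T ?h \<omega>) / p (T ?h \<omega>)) = x g \<omega> * ln (x g \<omega> / p \<omega>)"
      using ae by eventually_elim (simp add: x_def)
    have pm: "p \<in> borel_measurable M" using prior unfolding is_density_def M_def by simp
    have xm: "(\<lambda>\<omega>. x g \<omega> * ln (x g \<omega> / p \<omega>)) \<in> borel_measurable M"
      unfolding x_def using measurable_compose[OF Tmeas[OF h] qt_meas] pm by measurable
    have m1: "(\<lambda>\<omega>. qt (T ?h \<omega>) * ln (qt (T ?h \<omega>) / p (T ?h \<omega>))) \<in> borel_measurable M"
      using tr by (intro borel_measurable_integrable) simp
    have e1: "integrable M (\<lambda>\<omega>. qt (T ?h \<omega>) * ln (qt (T ?h \<omega>) / p (T ?h \<omega>)))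
       = integrable M (\<lambda>\<omega>. x g \<omega> * ln (x g \<omega> / p \<omega>))"
      by (rule integrable_cong_AE[OF m1 xm ae2])
    have e2: "integral\<^sup>L M (\<lambda>\<omega>. qt (T ?h \<omega>) * ln (qt (T ?h \<omega>) / p (T ?h \<omega>)))
       = integral\<^sup>L M (\<lambda>\<omega>. x g \<omega> * ln (x g \<omega> / p \<omega>))"
      by (rule integral_cong_AE[OF m1 xm ae2])
    show ?thesis using tr e1 e2 by simp
  qed
  have F_int: "integrable M F" and F_integral: "integral\<^sup>L M F = KL M qt p"
  proof -
    show "integrable M F" unfolding F_def using kl_x
      by (intro integrable_mult_right integrable_sum) auto
    have "integral\<^sup>L M F = (1 / N) * (\<Sum>g\<in>G. integral\<^sup>L M (\<lambda>\<omega>. x g \<omega> * ln (x g \<omega> / p \<omega>)))"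
      unfolding F_def using kl_x by (simp add: integral_sum)
    also have "\<dots> = KL M qt p" using kl_x Npos unfolding N_def by simp
    finally show "integral\<^sup>L M F = KL M qt p" .
  qed
  have D_int: "integrable M D" unfolding D_def using F_int f2G by (rule Bochner_Integration.integrable_diff)
  have D_integral: "integral\<^sup>L M D = KL M qt p - KL M qG p"
    unfolding D_def KL_def using F_int f2G F_integral unfolding KL_def by simp
  have D_nn: "0 \<le> D \<omega>" if w: "\<omega> \<in> space M" for \<omega>
  proof -
    have nn: "\<And>g. g \<in> G \<Longrightarrow> 0 \<le> x g \<omega>" using x_nn w by blast
    have m: "(1 / real (card G)) * (\<Sum>g\<in>G. x g \<omega>) = qG \<omega>" using qG_eq[of \<omega>] unfolding N_def by simp
    show ?thesis
      using jensen_pt(1)[where x="\<lambda>g. x g \<omega>" and c="p \<omega>", OF Gfin Gne nn p_nn[OF w], unfolded m] unfolding D_def F_def N_def by simp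
  qed
  have ELBO_diff: "ELBO M lik p qG - ELBO M lik p qt = integral\<^sup>L M D"
    unfolding ELBO_def D_integral using lik_G unfolding Ilik_def by simp
  have D_int0: "0 \<le> integral\<^sup>L M D" using D_nn by (simp add: integral_nonneg)
  have eq_iff: "integral\<^sup>L M D = 0 \<longleftrightarrow> (AE \<omega> in M. D \<omega> = 0)"
    using integral_nonneg_eq_0_iff_AE[OF D_int] D_nn by (simp add: AE_I2)
  have pt: "(\<forall>g\<in>G. x g \<omega> = qG \<omega>) \<longleftrightarrow> D \<omega> = 0"
    if w: "\<omega> \<in> space M" and pz: "p \<omega> = 0 \<longrightarrow> qG \<omega> = 0" for \<omega>
  proof
    assume "\<forall>g\<in>G. x g \<omega> = qG \<omega>"
    then show "D \<omega> = 0" unfolding D_def F_def using Npos by (simp add: N_def)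
  next
    assume D0: "D \<omega> = 0"
    show "\<forall>g\<in>G. x g \<omega> = qG \<omega>"
    proof (cases "p \<omega> = 0")
      case True
      then have "qG \<omega> = 0" using pz by simp
      then have "(\<Sum>g\<in>G. x g \<omega>) = 0" using qG_eq[of \<omega>] Npos by simp
      moreover have nn: "\<And>g. g \<in> G \<Longrightarrow> 0 \<le> x g \<omega>" using x_nn w by blast
      ultimately have "\<forall>g\<in>G. x g \<omega> = 0" using sum_nonneg_eq_0_iff[OF Gfin nn] by simp
      then show ?thesis using \<open>qG \<omega> = 0\<close> by simp
    next
      case False
      then have pp: "0 < p \<omega>" using p_nn[OF w] by linarith
      have nn: "\<And>g. g \<in> G \<Longrightarrow> 0 \<le> x g \<omega>" using x_nn w by blast
      have eqn: "qG \<omega> * ln (qG \<omega> / p \<omega>) = (1 / real (card G)) * (\<Sum>g\<in>G. x g \<omega> * ln (x g \<omega> / p \<omega>))"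
        using D0 unfolding D_def F_def N_def by simp
      have m: "(1 / real (card G)) * (\<Sum>g\<in>G. x g \<omega>) = qG \<omega>" using qG_eq[of \<omega>] unfolding N_def by simp
      show ?thesis
        using jensen_pt(2)[where x="\<lambda>g. x g \<omega>" and c="p \<omega>", OF Gfin Gne nn p_nn[OF w], unfolded m] eqn pp by blast
    qed
  qed
  have pzAE: "AE \<omega> in M. p \<omega> = 0 \<longrightarrow> qG \<omega> = 0"
    using finG unfolding finite_terms_def M_def qt_def qG_def by simp
  have inv_iff: "(AE \<omega> in M. D \<omega> = 0) \<longleftrightarrow> G_invariant d L qt"
  proof
    assume "AE \<omega> in M. D \<omega> = 0"
    then have ae: "AE \<omega> in M. \<forall>g\<in>G. x g \<omega> = qG \<omega>"
      using pzAE AE_space by eventually_elim (use pt in blast)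
    show "G_invariant d L qt" unfolding G_invariant_def
    proof
      fix h assume h: "h \<in> perm_group d L"
      then have hG: "h \<in> G" unfolding G_def .
      have "AE \<omega> in M. qt (T h \<omega>) = qt \<omega>"
        using ae AE_space
      proof eventually_elim
        case (elim \<omega>)
        then have "x (grp_inv h) \<omega> = qG \<omega>" "x (\<lambda>l. id) \<omega> = qG \<omega>" using Ginv hG idG by auto
        then show ?case using x_inv[OF hG] x_id elim by metis
      qed
      then show "AE \<omega> in weight_space d L. qt (act d L h \<omega>) = qt \<omega>" unfolding M_def T_def .
    qed
  next
    assume inv: "G_invariant d L qt"
    have "\<And>g. g \<in> G \<Longrightarrow> AE \<omega> in M. qt (T g \<omega>) = qt \<omega>"
      using inv unfolding G_invariant_def M_def G_def T_def by blast
    then have ae: "AE \<omega> in M. \<forall>g\<in>G. qt (T g \<omega>) = qt \<omega>" by (rule AE_finite_allI[OF Gfin])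
    have ae2: "AE \<omega> in M. \<forall>g\<in>G. x g \<omega> = qG \<omega>"
      using ae
    proof eventually_elim
      case (elim \<omega>)
      then have xq: "\<forall>g\<in>G. x g \<omega> = qt \<omega>" unfolding x_def using Ginv by blast
      then have "qG \<omega> = qt \<omega>" using qG_eq[of \<omega>] Npos unfolding N_def by simp
      then show ?case using xq by simp
    qed
    show "AE \<omega> in M. D \<omega> = 0"
      using ae2 pzAE AE_space by eventually_elim (use pt in blast)
  qed
  show ?thesis
    using ELBO_diff D_int0 eq_iff inv_iff unfolding M_def qG_def qt_def by auto
qed

end
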